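(* Let $i\in\{1,2\}$ and let $\alpha_1,\dots,\alpha_N$ be $x_i$-curves in $\mathbb{R}^2$. Then there are $x_i$-curves $\beta_j=\gamma^i(f_j)$, $j=1,\dots,N$, such that $\alpha_1\cup\dots\cup\alpha_N=\beta_1\cup\dots\cup\beta_N$ and $f_{j-1}(t)\le f_j(t)$ for all $t\in\mathbb{R}$ and all $1<j\le N$. If the curves $\alpha_j$ are piecewise linear, then so are the curves $\beta_j$.
   Context: For a $1$-Lipschitz $f:\mathbb{R}\to\mathbb{R}$, the $x_1$-curve parametrized by $f$ is $\gamma^1(f)=\{(t,f(t)):t\in\mathbb{R}\}$ and the $x_2$-curve is $\gamma^2(f)=\{(f(t),t):t\in\mathbb{R}\}$. An $x_i$-curve is a set of this form; it is piecewise linear if its parametrization is. *)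

theory Defs
  imports "HOL-Analysis.Analysis"
begin

definition gamma :: "nat \<Rightarrow> (real \<Rightarrow> real) \<Rightarrow> (real \<times> real) set" where
  "gamma i f = (if i = 1 then {(t, f t) | t. True} else {(f t, t) | t. True})"

definition lip1 :: "(real \<Rightarrow> real) \<Rightarrow> bool" where
  "lip1 f \<longleftrightarrow> 1-lipschitz_on UNIV f"

definition piecewise_linear :: "(real \<Rightarrow> real) \<Rightarrow> bool" where
  "piecewise_linear f \<longleftrightarrow> (\<exists>S. finite S \<and>
     (\<forall>a b. {a<..<b} \<inter> S = {} \<longrightarrow> (\<exists>m c. \<forall>t\<in>{a..b}. f t = m * t + c)))"

definition is_curve :: "nat \<Rightarrow> (real \<times> real) set \<Rightarrow> bool" where
  "is_curve i A \<longleftrightarrow> (\<exists>f. lip1 f \<and> A = gamma i f)"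

definition is_pl_curve :: "nat \<Rightarrow> (real \<times> real) set \<Rightarrow> bool" where
  "is_pl_curve i A \<longleftrightarrow> (\<exists>f. lip1 f \<and> piecewise_linear f \<and> A = gamma i f)"

end

theory Submission
  imports Defs
begin


lemma lip1_min: assumes "lip1 f" "lip1 g" shows "lip1 (\<lambda>t. min (f t) (g t))"
proof -
  have "\<And>x y. \<bar>f x - f y\<bar> \<le> \<bar>x - y\<bar>" "\<And>x y. \<bar>g x - g y\<bar> \<le> \<bar>x - y\<bar>"
    using assms by (auto simp: lip1_def dist_real_def dest: lipschitz_onD)
  then show ?thesis unfolding lip1_def
    by (intro lipschitz_onI) (auto simp: dist_real_def min_def abs_le_iff, smt+)
qed

lemma pl_uminus: assumes "piecewise_linear f" shows "piecewise_linear (\<lambda>t. - f t)"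
proof -
  from assms obtain S where S: "finite S" "\<forall>a b. {a<..<b} \<inter> S = {} \<longrightarrow> (\<exists>m c. \<forall>t\<in>{a..b}. f t = m * t + c)"
    unfolding piecewise_linear_def by blast
  show ?thesis unfolding piecewise_linear_def
  proof (intro exI[of _ S] conjI allI impI)
    fix a b assume "{a<..<b} \<inter> S = {}"
    then obtain m c where "\<forall>t\<in>{a..b}. f t = m * t + c" using S by blast
    then show "\<exists>m c. \<forall>t\<in>{a..b}. - f t = m * t + c" by (intro exI[of _ "-m"] exI[of _ "-c"]) auto
  qed (fact S)
qed



lemma aff_sign:
  fixes m c a b t :: real
  assumes "a \<le> t" "t \<le> b" "m*a + c \<le> 0" "m*b + c \<le> 0"
  shows "m*t + c \<le> 0"
proof (cases "m \<ge> 0")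
  case True then have "m*t \<le> m*b" using assms by (simp add: mult_left_mono)
  then show ?thesis using assms by linarith
next
  case False then have "m*t \<le> m*a" using assms by (simp add: mult_left_mono_neg)
  then show ?thesis using assms by linarith
qed

lemma pl_min: assumes "piecewise_linear f" "piecewise_linear g"
  shows "piecewise_linear (\<lambda>t. min (f t) (g t))"
proof -
  from assms(1) obtain Sf where Sf: "finite Sf" "\<And>a b. {a<..<b} \<inter> Sf = {} \<Longrightarrow> (\<exists>m c. \<forall>t\<in>{a..b}. f t = m * t + c)"
    unfolding piecewise_linear_def by blast
  from assms(2) obtain Sg where Sg: "finite Sg" "\<And>a b. {a<..<b} \<inter> Sg = {} \<Longrightarrow> (\<exists>m c. \<forall>t\<in>{a..b}. g t = m * t + c)"
    unfolding piecewise_linear_def by blast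
  define S where "S = Sf \<union> Sg"
  define D where "D t = f t - g t" for t
  have finS: "finite S" using Sf Sg S_def by auto
  have affD: "\<exists>m c. \<forall>t\<in>{a..b}. D t = m * t + c" if hab: "{a<..<b} \<inter> S = {}" for a b
  proof -
    obtain m1 c1 where 1: "\<forall>t\<in>{a..b}. f t = m1 * t + c1" using Sf(2)[of a b] hab S_def by blast
    obtain m2 c2 where 2: "\<forall>t\<in>{a..b}. g t = m2 * t + c2" using Sg(2)[of a b] hab S_def by blast
    show ?thesis using 1 2 by (intro exI[of _ "m1 - m2"] exI[of _ "c1 - c2"]) (auto simp: D_def algebra_simps)
  qed
  define C where "C = {t. t \<notin> S \<and> D t = 0 \<and> \<not>(\<exists>e>0. \<forall>s. \<bar>s-t\<bar> < e \<longrightarrow> D s = 0)}"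
  define pred where "pred t = (if \<exists>s\<in>S. s<t then Some (Max {s\<in>S. s<t}) else None)" for t
  have noinj: False if t1: "t1 \<in> C" and t2: "t2 \<in> C" and lt: "t1 < t2" and eq: "pred t1 = pred t2" for t1 t2
  proof -
    have gap: "s \<notin> S" if "t1 < s" "s < t2" for s
    proof
      assume sS: "s \<in> S"
      then have ex2: "\<exists>s\<in>S. s<t2" using that by auto
      have "s \<le> Max {s\<in>S. s<t2}" using sS that finS by (intro Max_ge) auto
      moreover have ex1: "\<exists>s\<in>S. s<t1" using eq ex2 unfolding pred_def by (auto split: if_splits)
      then have "Max {s\<in>S. s<t1} \<in> {s\<in>S. s<t1}" using finS by (intro Max_in) auto
      moreover have "Max {s\<in>S. s<t1} = Max {s\<in>S. s<t2}" using eq ex1 ex2 unfolding pred_def by auto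
      ultimately show False using that by auto
    qed
    have "t1 \<notin> S" using t1 C_def by auto
    moreover have "open (- S)" using finS finite_imp_closed by blast
    ultimately obtain e where e: "e > 0" "ball t1 e \<subseteq> - S" by (meson ComplI open_contains_ball)
    define a where "a = t1 - e/2"
    have "{a<..<t2} \<inter> S = {}"
    proof (auto)
      fix y assume y: "a < y" "y < t2" "y \<in> S"
      show False
      proof (cases "y \<le> t1")
        case True then have "y \<in> ball t1 e" using y e a_def by (auto simp: dist_real_def)
        then show False using e y by auto
      next
        case False then show False using gap y by auto
      qed
    qed
    then obtain m c where mc: "\<forall>t\<in>{a..t2}. D t = m * t + c" using affD by blast
    have "D t1 = 0" "D t2 = 0" using t1 t2 C_def by auto
    then have "m*t1 + c = 0" "m*t2 + c = 0" using mc a_def e lt by auto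
    then have "m*t2 - m*t1 = 0" by linarith
    then have "m * (t2 - t1) = 0" by (simp only: right_diff_distrib)
    then have m0: "m = 0" using lt by simp
    then have c0: "c = 0" using \<open>m*t1 + c = 0\<close> by simp
    have "\<forall>s. \<bar>s-t1\<bar> < min (e/2) (t2-t1) \<longrightarrow> D s = 0"
    proof (intro allI impI)
      fix s assume "\<bar>s-t1\<bar> < min (e/2) (t2-t1)"
      then have "\<bar>s-t1\<bar> < e/2" "\<bar>s-t1\<bar> < t2-t1" by auto
      then have "s \<in> {a..t2}" unfolding a_def abs_less_iff atLeastAtMost_iff by linarith
      then show "D s = 0" using mc m0 c0 by auto
    qed
    moreover have "min (e/2) (t2-t1) > 0" using e lt by auto
    ultimately show False using t1 unfolding C_def by blast
  qed
  have "inj_on pred C"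
  proof (rule inj_onI)
    fix x y assume "x \<in> C" "y \<in> C" "pred x = pred y"
    then show "x = y" using noinj[of x y] noinj[of y x] by (cases x y rule: linorder_cases) auto
  qed
  moreover have "pred ` C \<subseteq> insert None (Some ` S)"
  proof
    fix z assume "z \<in> pred ` C"
    then obtain t where "z = pred t" by auto
    then show "z \<in> insert None (Some ` S)"
    proof (cases "\<exists>s\<in>S. s<t")
      case True
      then have "Max {s\<in>S. s<t} \<in> {s\<in>S. s<t}" using finS by (intro Max_in) auto
      then show ?thesis using True \<open>z = pred t\<close> unfolding pred_def by auto
    qed (auto simp: pred_def)
  qed
  ultimately have finC: "finite C" using finS
    by (metis finite_imageI finite_imageD finite_insert finite_subset)
  show ?thesis unfolding piecewise_linear_def
  proof (intro exI[of _ "S \<union> C"] conjI allI impI)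
    show "finite (S \<union> C)" using finS finC by auto
    fix a b assume ab: "{a<..<b} \<inter> (S \<union> C) = {}"
    show "\<exists>m c. \<forall>t\<in>{a..b}. min (f t) (g t) = m * t + c"
    proof (cases "a < b")
      case False
      then have "\<forall>t\<in>{a..b}. t = a" by auto
      then show ?thesis by (intro exI[of _ 0] exI[of _ "min (f a) (g a)"]) auto
    next
      case True
      have abS: "{a<..<b} \<inter> S = {}" using ab by auto
      obtain m1 c1 where 1: "\<forall>t\<in>{a..b}. f t = m1 * t + c1" using Sf(2)[of a b] abS S_def by blast
      obtain m2 c2 where 2: "\<forall>t\<in>{a..b}. g t = m2 * t + c2" using Sg(2)[of a b] abS S_def by blast
      define m where "m = m1 - m2"
      define c where "c = c1 - c2"
      have Dt: "D t = m * t + c" if "t \<in> {a..b}" for t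
        using 1 2 that by (auto simp: D_def m_def c_def algebra_simps)
      consider "D a \<le> 0 \<and> D b \<le> 0" | "D a \<ge> 0 \<and> D b \<ge> 0" | "(D a < 0 \<and> D b > 0) \<or> (D a > 0 \<and> D b < 0)"
        by linarith
      then show ?thesis
      proof cases
        case 1
        have "min (f t) (g t) = m1 * t + c1" if "t \<in> {a..b}" for t
        proof -
          have "m*t + c \<le> 0" using aff_sign[of a t b m c] that 1 Dt[of a] Dt[of b] True by auto
          then have "D t \<le> 0" using Dt that by auto
          then show ?thesis using \<open>\<forall>t\<in>{a..b}. f t = m1 * t + c1\<close> that by (auto simp: D_def)
        qed
        then show ?thesis by blast
      next
        case 2
        have "min (f t) (g t) = m2 * t + c2" if "t \<in> {a..b}" for t
        proof -
          have "(-m)*t + (-c) \<le> 0" using aff_sign[of a t b "-m" "-c"] that 2 Dt[of a] Dt[of b] True by auto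
          then have "D t \<ge> 0" using Dt that by auto
          then show ?thesis using \<open>\<forall>t\<in>{a..b}. g t = m2 * t + c2\<close> that by (auto simp: D_def)
        qed
        then show ?thesis by blast
      next
        case 3
        have Da: "D a = m*a + c" and Db: "D b = m*b+c" using Dt True by auto
        have diff: "D b - D a = m * (b - a)" using Da Db by (simp add: algebra_simps)
        have m0: "m \<noteq> 0" using 3 diff by auto
        define t0 where "t0 = - c / m"
        have "m * t0 + c = 0" using m0 t0_def by (simp add: field_simps)
        have "t0 - a = - D a / m" using m0 Da t0_def by (simp add: field_simps)
        moreover have "b - t0 = D b / m" using m0 Db t0_def by (simp add: field_simps)
        moreover have "(m > 0 \<and> D a < 0 \<and> D b > 0) \<or> (m < 0 \<and> D a > 0 \<and> D b < 0)"
        proof -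
          have "(D a < 0 \<and> D b > 0 \<and> m*(b-a) > 0) \<or> (D a > 0 \<and> D b < 0 \<and> m*(b-a) < 0)"
            using 3 diff by linarith
          moreover have "b - a > 0" using True by simp
          ultimately show ?thesis by (auto simp: zero_less_mult_iff mult_less_0_iff)
        qed
        then have "D a / m < 0" "D b / m > 0" by (auto simp: divide_less_0_iff zero_less_divide_iff)
        ultimately have t0ab: "a < t0" "t0 < b" by linarith+
        have "t0 \<in> C"
          unfolding C_def
        proof (intro CollectI conjI notI)
          show "t0 \<in> S \<Longrightarrow> False" using abS t0ab by auto
          show "D t0 = 0" using Dt[of t0] t0ab \<open>m * t0 + c = 0\<close> by auto
          assume "\<exists>e>0. \<forall>s. \<bar>s - t0\<bar> < e \<longrightarrow> D s = 0"
          then obtain e where e: "e > 0" "\<forall>s. \<bar>s - t0\<bar> < e \<longrightarrow> D s = 0" by blast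
          define d where "d = min (e/2) ((b-t0)/2)"
          define s where "s = t0 + d"
          have "d > 0" "d \<le> e/2" "d \<le> (b-t0)/2"
            using e t0ab by (auto simp: min_def d_def)
          then have "\<bar>s - t0\<bar> < e" "s \<in> {a..b}" "s \<noteq> t0" unfolding s_def atLeastAtMost_iff using t0ab by auto
          then have "D s = 0" "D s = m * s + c" using e Dt by auto
          then have "m * s - m * t0 = 0" using \<open>m * t0 + c = 0\<close> by linarith
          then have "m * (s - t0) = 0" by (simp only: right_diff_distrib)
          then show False using m0 \<open>s \<noteq> t0\<close> by simp
        qed
        then show ?thesis using ab t0ab by auto
      qed
    qed
  qed
qed



lemma fam_Min:
  assumes "finite I" "I \<noteq> {}" "\<forall>i\<in>I. P (h i)" "\<And>f g. P f \<Longrightarrow> P g \<Longrightarrow> P (\<lambda>t. min (f t) (g t))"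
  shows "P (\<lambda>t. Min ((\<lambda>i. h i t) ` I))"
  using assms(1,2,3)
proof (induction I rule: finite_ne_induct)
  case (singleton x)
  then show ?case by (simp add: eta_contract_eq)
next
  case (insert x F)
  have "(\<lambda>t. Min ((\<lambda>i. h i t) ` insert x F)) = (\<lambda>t. min (h x t) (Min ((\<lambda>i. h i t) ` F)))"
    using insert by (simp add: Min_insert)
  then show ?case using insert assms(4) by simp
qed

lemma fam_Max:
  assumes "finite I" "I \<noteq> {}" "\<forall>i\<in>I. P (h i)" "\<And>f g. P f \<Longrightarrow> P g \<Longrightarrow> P (\<lambda>t. max (f t) (g t))"
  shows "P (\<lambda>t. Max ((\<lambda>i. h i t) ` I))"
  using assms(1,2,3)
proof (induction I rule: finite_ne_induct)
  case (singleton x)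
  then show ?case by (simp add: eta_contract_eq)
next
  case (insert x F)
  have "(\<lambda>t. Max ((\<lambda>i. h i t) ` insert x F)) = (\<lambda>t. max (h x t) (Max ((\<lambda>i. h i t) ` F)))"
    using insert by (simp add: Max_insert)
  then show ?case using insert assms(4) by simp
qed


definition os :: "(nat \<Rightarrow> real) \<Rightarrow> nat \<Rightarrow> nat \<Rightarrow> real" where
  "os v N j = Min ((\<lambda>J. Max (v ` J)) ` {J. J \<subseteq> {1..N} \<and> card J = j})"

lemma fam_fin: "finite {J. J \<subseteq> {1..(N::nat)} \<and> card J = j}"
  by (rule finite_subset[of _ "Pow {1..N}"]) auto

lemma fam_ne: assumes "j \<le> N" shows "{J. J \<subseteq> {1..(N::nat)} \<and> card J = j} \<noteq> {}"
proof -
  have "{1..j} \<subseteq> {1..N}" "card {1..j} = j" using assms by auto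
  then show ?thesis by blast
qed

lemma fam_mem_ne: "J \<in> {J. J \<subseteq> {1..(N::nat)} \<and> card J = j} \<Longrightarrow> j \<ge> 1 \<Longrightarrow> J \<noteq> {} \<and> finite J"
  using finite_subset[of J "{1..N}"] by auto


lemma os_attained:
  assumes "1 \<le> j" "j \<le> N"
  shows "\<exists>J. J \<subseteq> {1..N} \<and> card J = j \<and> os v N j = Max (v ` J)"
proof -
  have "os v N j \<in> (\<lambda>J. Max (v ` J)) ` {J. J \<subseteq> {1..N} \<and> card J = j}"
    unfolding os_def using fam_fin fam_ne assms by (intro Min_in) auto
  then show ?thesis by auto
qed

lemma os_le:
  assumes "J \<subseteq> {1..N}" "card J = j"
  shows "os v N j \<le> Max (v ` J)"
  unfolding os_def using fam_fin assms by (intro Min_le) auto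

lemma os_in:
  assumes "1 \<le> j" "j \<le> N"
  shows "\<exists>k\<in>{1..N}. os v N j = v k"
proof -
  obtain J where J: "J \<subseteq> {1..N}" "card J = j" "os v N j = Max (v ` J)" using os_attained assms by blast
  then have "J \<noteq> {}" "finite J" using assms by (auto intro: finite_subset)
  then have "Max (v ` J) \<in> v ` J" by (intro Max_in) auto
  then show ?thesis using J by auto
qed


lemma os_mono:
  assumes "1 < j" "j \<le> N"
  shows "os v N (j - 1) \<le> os v N j"
proof -
  have "1 \<le> j" using assms by simp
  then obtain J where J: "J \<subseteq> {1..N}" "card J = j" "os v N j = Max (v ` J)" using os_attained[of j N v] assms(2) by blast
  have fJ: "finite J" using J(1) finite_subset by blast
  have "J \<noteq> {}" using J assms by auto
  then obtain k where k: "k \<in> J" by blast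
  define J' where "J' = J - {k}"
  have "card J' = j - 1" using J fJ k J'_def by simp
  moreover have "J' \<subseteq> {1..N}" using J J'_def by auto
  ultimately have "os v N (j - 1) \<le> Max (v ` J')" using os_le[of J' N "j - 1" v] by blast
  also have "\<dots> \<le> Max (v ` J)"
  proof -
    have "J' \<noteq> {}" using \<open>card J' = j - 1\<close> assms by auto
    then show ?thesis using fJ J'_def by (intro Max_mono) auto
  qed
  finally show ?thesis using J by simp
qed

lemma os_surj:
  assumes "k \<in> {1..N}"
  shows "\<exists>j\<in>{1..N}. os v N j = v k"
proof -
  define L where "L = {l \<in> {1..N}. v l \<le> v k}"
  define j where "j = card L"
  have fL: "finite L" using L_def by auto
  have kL: "k \<in> L" using assms L_def by auto
  have "card L > 0" using fL kL card_gt_0_iff by blast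
  then have j1: "1 \<le> j" by (simp add: j_def)
  have "L \<subseteq> {1..N}" using L_def by auto
  then have "card L \<le> card {1..N}" by (intro card_mono) auto
  then have jN: "j \<le> N" by (simp add: j_def)
  have "os v N j \<le> Max (v ` L)" using os_le[OF \<open>L \<subseteq> {1..N}\<close>] j_def by blast
  also have "\<dots> \<le> v k" using fL kL L_def by (subst Max_le_iff) auto
  finally have le: "os v N j \<le> v k" .
  have "\<not> os v N j < v k"
  proof
    assume lt: "os v N j < v k"
    obtain J where J: "J \<subseteq> {1..N}" "card J = j" "os v N j = Max (v ` J)" using os_attained j1 jN by blast
    have fJ: "finite J" using J(1) finite_subset by blast
    have "J \<noteq> {}" using J j1 by auto
    have "\<forall>l\<in>J. v l < v k"
    proof
      fix l assume "l \<in> J"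
      then have "v l \<le> Max (v ` J)" using fJ by (intro Max_ge) auto
      then show "v l < v k" using lt J(3) by simp
    qed
    then have "J \<subseteq> L - {k}" using J(1) L_def by auto
    then have "card J \<le> card (L - {k})" using fL by (intro card_mono) auto
    also have "\<dots> < j" using fL kL j_def j1 by (simp add: card_Diff1_less)
    finally show False using J by simp
  qed
  then have "os v N j = v k" using le by linarith
  then show ?thesis using j1 jN by auto
qed



lemma lip1_max: assumes "lip1 f" "lip1 g" shows "lip1 (\<lambda>t. max (f t) (g t))"
proof -
  have "\<And>x y. \<bar>f x - f y\<bar> \<le> \<bar>x - y\<bar>" "\<And>x y. \<bar>g x - g y\<bar> \<le> \<bar>x - y\<bar>"
    using assms by (auto simp: lip1_def dist_real_def dest: lipschitz_onD)
  then show ?thesis unfolding lip1_def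
    by (intro lipschitz_onI) (auto simp: dist_real_def max_def abs_le_iff, smt+)
qed

lemma pl_max: assumes "piecewise_linear f" "piecewise_linear g"
  shows "piecewise_linear (\<lambda>t. max (f t) (g t))"
proof -
  have "piecewise_linear (\<lambda>t. - min (- f t) (- g t))"
    using assms by (intro pl_uminus pl_min) 
  moreover have "(\<lambda>t. - min (- f t) (- g t)) = (\<lambda>t. max (f t) (g t))" by (auto simp: min_def max_def)
  ultimately show ?thesis by simp
qed

lemma gamma_inj: assumes "gamma i f = gamma i g" shows "f = g"
proof
  fix t
  show "f t = g t"
  proof (cases "i = 1")
    case True
    have "(t, f t) \<in> gamma i f" using True by (simp add: gamma_def)
    then have "(t, f t) \<in> gamma i g" using assms by simp
    then show ?thesis using True by (auto simp: gamma_def)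
  next
    case False
    have "(f t, t) \<in> gamma i f" using False by (simp add: gamma_def)
    then have "(f t, t) \<in> gamma i g" using assms by simp
    then show ?thesis using False by (auto simp: gamma_def)
  qed
qed

lemma gamma_union_sub:
  assumes "\<forall>t. \<forall>j\<in>A. \<exists>k\<in>A. F j t = G k t"
  shows "(\<Union>j\<in>A. gamma i (F j)) \<subseteq> (\<Union>j\<in>A. gamma i (G j))"
proof
  fix x assume "x \<in> (\<Union>j\<in>A. gamma i (F j))"
  then obtain j where j: "j \<in> A" "x \<in> gamma i (F j)" by blast
  show "x \<in> (\<Union>j\<in>A. gamma i (G j))"
  proof (cases "i = 1")
    case True
    then obtain t where x: "x = (t, F j t)" using j by (auto simp: gamma_def)
    obtain k where "k \<in> A" "F j t = G k t" using assms j by blast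
    then show ?thesis using x True by (auto simp: gamma_def)
  next
    case False
    then obtain t where x: "x = (F j t, t)" using j by (auto simp: gamma_def)
    obtain k where "k \<in> A" "F j t = G k t" using assms j by blast
    then show ?thesis using x False by (auto simp: gamma_def)
  qed
qed

theorem lemma4p6:
  fixes i N :: nat and \<alpha> :: "nat \<Rightarrow> (real \<times> real) set"
  assumes "i \<in> {1, 2}"
    and "\<forall>j\<in>{1..N}. is_curve i (\<alpha> j)"
  shows "\<exists>f :: nat \<Rightarrow> real \<Rightarrow> real.
           (\<forall>j\<in>{1..N}. lip1 (f j))
         \<and> (\<Union>j\<in>{1..N}. \<alpha> j) = (\<Union>j\<in>{1..N}. gamma i (f j))
         \<and> (\<forall>j. 1 < j \<and> j \<le> N \<longrightarrow> (\<forall>t. f (j - 1) t \<le> f j t))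
         \<and> ((\<forall>j\<in>{1..N}. is_pl_curve i (\<alpha> j)) \<longrightarrow> (\<forall>j\<in>{1..N}. piecewise_linear (f j)))"
proof -
  have "\<forall>j\<in>{1..N}. \<exists>f. lip1 f \<and> \<alpha> j = gamma i f" using assms(2) unfolding is_curve_def by blast
  then obtain g where g: "\<forall>j\<in>{1..N}. lip1 (g j) \<and> \<alpha> j = gamma i (g j)" by (rule bchoice[elim_format]) blast
  define F where "F j t = os (\<lambda>k. g k t) N j" for j t
  define \<J> where "\<J> j = {J. J \<subseteq> {1..N} \<and> card J = j}" for j
  define h where "h J = (\<lambda>t. Max ((\<lambda>k. g k t) ` J))" for J
  have Feq: "F j = (\<lambda>t. Min ((\<lambda>J. h J t) ` \<J> j))" for j
    by (auto simp: F_def os_def h_def \<J>_def)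
  have famP: "P (F j)" if j: "j \<in> {1..N}" and gP: "\<forall>k\<in>{1..N}. P (g k)"
    and cmin: "\<And>f g. P f \<Longrightarrow> P g \<Longrightarrow> P (\<lambda>t. min (f t) (g t))"
    and cmax: "\<And>f g. P f \<Longrightarrow> P g \<Longrightarrow> P (\<lambda>t. max (f t) (g t))" for P j
  proof -
    have "P (\<lambda>t. Min ((\<lambda>J. h J t) ` \<J> j))"
    proof (rule fam_Min[where P=P, OF _ _ _ cmin])
      show "finite (\<J> j)" unfolding \<J>_def by (rule fam_fin)
      show "\<J> j \<noteq> {}" unfolding \<J>_def using j by (intro fam_ne) auto
      show "\<forall>J\<in>\<J> j. P (h J)"
      proof
        fix J assume J: "J \<in> \<J> j"
        then have "J \<noteq> {} \<and> finite J" using fam_mem_ne[of J N j] j unfolding \<J>_def by auto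
        moreover have "J \<subseteq> {1..N}" using J \<J>_def by auto
        ultimately show "P (h J)" unfolding h_def using gP
          by (intro fam_Max[where P=P, OF _ _ _ cmax]) auto
      qed
    qed auto
    then show ?thesis using Feq by simp
  qed
  show ?thesis
  proof (intro exI[of _ F] conjI allI impI ballI)
    fix j assume "j \<in> {1..N}"
    then show "lip1 (F j)" using g by (intro famP[where P=lip1]) (auto intro: lip1_min lip1_max)
  next
    have "(\<Union>j\<in>{1..N}. \<alpha> j) = (\<Union>j\<in>{1..N}. gamma i (g j))" using g by auto
    also have "\<dots> = (\<Union>j\<in>{1..N}. gamma i (F j))"
    proof
      show "(\<Union>j\<in>{1..N}. gamma i (g j)) \<subseteq> (\<Union>j\<in>{1..N}. gamma i (F j))"
        by (rule gamma_union_sub) (metis F_def os_surj)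
      show "(\<Union>j\<in>{1..N}. gamma i (F j)) \<subseteq> (\<Union>j\<in>{1..N}. gamma i (g j))"
        by (rule gamma_union_sub) (metis F_def os_in atLeastAtMost_iff)
    qed
    finally show "(\<Union>j\<in>{1..N}. \<alpha> j) = (\<Union>j\<in>{1..N}. gamma i (F j))" .
  next
    fix j t assume "1 < j \<and> j \<le> N"
    then show "F (j - 1) t \<le> F j t" unfolding F_def by (intro os_mono) auto
  next
    fix j assume pl: "\<forall>j\<in>{1..N}. is_pl_curve i (\<alpha> j)" and j: "j \<in> {1..N}"
    have gpl: "\<forall>k\<in>{1..N}. piecewise_linear (g k)"
    proof
      fix k assume k: "k \<in> {1..N}"
      then obtain p where p: "piecewise_linear p" "\<alpha> k = gamma i p" using pl unfolding is_pl_curve_def by blast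
      then have "p = g k" using g k by (intro gamma_inj) auto
      then show "piecewise_linear (g k)" using p by simp
    qed
    show "piecewise_linear (F j)" using j gpl by (intro famP[where P=piecewise_linear]) (auto intro: pl_min pl_max)
  qed
qed


end
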